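(* Let $(D,\rho)$, $(L_1,\sigma_1)$, $(L_2,\sigma_2)$ be metric spaces and let $(\mathcal M,\|\cdot\|)$ be a normed linear space. Let $\varphi_1: D\times L_1\to\mathcal M$ and $\varphi_2: D\times L_2\to\mathcal M$ be maps such that: (a) there are $C_0>0$ and $\alpha>0$ such that for $i=1,2$, all $\xi\in D$ and all $x,y\in L_i$, $\|\varphi_i(\xi,x)-\varphi_i(\xi,y)\|\le C_0[\sigma_i(x,y)]^{\alpha}$; (b) there are $M_0>0$ and $\beta>0$ such that the function $\Phi(\xi,x_1,x_2):=\varphi_1(\xi,x_1)-\varphi_2(\xi,x_2)$ on $D\times L_1\times L_2$ satisfies $\|\Phi(\xi',x_1,x_2)-\Phi(\xi,x_1,x_2)\|\ge M_0[\rho(\xi',\xi)]^{\beta}$ for all $(x_1,x_2)\in L_1\times L_2$ and all $\xi,\xi'\in D$. Then the set $\Delta:=\{\xi\in D:\ \varphi_1(\xi,L_1)\cap\varphi_2(\xi,L_2)\ne\varnothing\}$ satisfies $$\dim_H\Delta\le\min\{(\beta/\alpha)\dim_H(L_1\times L_2),\ \dim_H D\}.$$ Moreover, if $\varphi_1,\varphi_2$ are continuous and $L_1,L_2$ are compact, then $\Delta$ is closed in $D$.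
   Context: Cartesian products of metric spaces carry the canonical product metric, e.g. on $L_1\times L_2$: $\tilde\sigma((x_1,x_2),(y_1,y_2))=\sqrt{\sigma_1(x_1,y_1)^2+\sigma_2(x_2,y_2)^2}$, and similarly on $D\times L_i$ and $D\times L_1\times L_2$. $\dim_H$ denotes Hausdorff dimension of a metric space. *)

theory Defs
  imports "HOL-Analysis.Analysis"
begin

definition hausdorff_pre :: "real \<Rightarrow> real \<Rightarrow> 'a::metric_space set \<Rightarrow> ennreal" where
  "hausdorff_pre s \<delta> A =
     (INF U \<in> {U :: nat \<Rightarrow> 'a set. A \<subseteq> (\<Union>i. U i) \<and>
                 (\<forall>i. bounded (U i) \<and> diameter (U i) \<le> \<delta>)}.
        (\<Sum>i. ennreal (diameter (U i) powr s)))"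

definition hausdorff_measure :: "real \<Rightarrow> 'a::metric_space set \<Rightarrow> ennreal" where
  "hausdorff_measure s A = (SUP \<delta> \<in> {0<..}. hausdorff_pre s \<delta> A)"

definition hausdorff_dim :: "'a::metric_space set \<Rightarrow> ereal" where
  "hausdorff_dim A = Inf {ereal s | s. 0 < s \<and> hausdorff_measure s A = 0}"

end

theory Submission imports Defs begin

lemma hm_pre_zero:
  assumes "hausdorff_measure s A = 0" "\<delta> > 0"
  shows "hausdorff_pre s \<delta> A = 0"
proof -
  have "hausdorff_pre s \<delta> A \<le> hausdorff_measure s A"
    unfolding hausdorff_measure_def using assms(2) by (intro SUP_upper) auto
  thus ?thesis using assms(1) by simp
qed

lemma hpre_mono:
  assumes "C \<subseteq> B"
  shows "hausdorff_pre s \<delta> C \<le> hausdorff_pre s \<delta> B"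
  unfolding hausdorff_pre_def
  by (rule INF_superset_mono) (use assms in auto)

lemma hm_mono_zero:
  assumes "C \<subseteq> B" "hausdorff_measure s B = 0"
  shows "hausdorff_measure s C = 0"
proof -
  have "hausdorff_measure s C \<le> hausdorff_measure s B"
    unfolding hausdorff_measure_def by (intro SUP_mono) (use hpre_mono[OF assms(1)] in auto)
  thus ?thesis using assms(2) by simp
qed

lemma hdim_mono:
  assumes "C \<subseteq> B"
  shows "hausdorff_dim C \<le> hausdorff_dim B"
  unfolding hausdorff_dim_def
  by (rule Inf_superset_mono) (use hm_mono_zero[OF assms] in auto)

lemma hdim_nonneg: "hausdorff_dim A \<ge> 0"
  unfolding hausdorff_dim_def by (rule Inf_greatest) auto

lemma diameter_le_metric:
  fixes S :: "'a::metric_space set"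
  assumes "0 \<le> d" "\<And>x y. x \<in> S \<Longrightarrow> y \<in> S \<Longrightarrow> dist x y \<le> d"
  shows "diameter S \<le> d"
  using assms by (auto simp: diameter_def intro!: cSUP_least)

lemma holder_null:
  fixes f :: "'a::metric_space \<Rightarrow> 'b::metric_space"
  assumes K: "K > 0" and g: "\<gamma> > 0" and s: "s > 0"
    and H: "\<forall>x\<in>A. \<forall>y\<in>A. dist x y \<le> K * dist (f x) (f y) powr \<gamma>"
    and Z: "hausdorff_measure s (f ` A) = 0"
  shows "hausdorff_measure (s / \<gamma>) A = 0"
proof -
  have "hausdorff_pre (s/\<gamma>) \<delta> A = 0" if d: "\<delta> > 0" for \<delta>
  proof -
    define \<delta>' where "\<delta>' = (\<delta>/K) powr (1/\<gamma>)"
    have d'pos: "\<delta>' > 0" using d K unfolding \<delta>'_def by simp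
    have Kd: "K * \<delta>' powr \<gamma> = \<delta>"
      using d K g unfolding \<delta>'_def by (simp add: powr_powr)
    have P0: "hausdorff_pre s \<delta>' (f ` A) = 0" using hm_pre_zero[OF Z d'pos] .
    define c where "c = K powr (s/\<gamma>)"
    have cpos: "c > 0" using K unfolding c_def by simp
    have "hausdorff_pre (s/\<gamma>) \<delta> A \<le> 0 + ennreal e" if e: "e > 0" for e :: real
    proof -
      have "hausdorff_pre s \<delta>' (f ` A) < ennreal (e / c)" using P0 e cpos by simp
      then obtain U where U: "f ` A \<subseteq> (\<Union>i. U i)" "\<forall>i. bounded (U i) \<and> diameter (U i) \<le> \<delta>'"
        and Us: "(\<Sum>i. ennreal (diameter (U i) powr s)) < ennreal (e / c)"
        unfolding hausdorff_pre_def INF_less_iff by auto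
      define V where "V i = {x\<in>A. f x \<in> U i}" for i
      have Vd: "\<forall>x\<in>V i. \<forall>y\<in>V i. dist x y \<le> K * diameter (U i) powr \<gamma>" for i
      proof (intro ballI)
        fix x y assume "x \<in> V i" "y \<in> V i"
        hence "dist (f x) (f y) \<le> diameter (U i)" "x \<in> A" "y \<in> A"
          using U(2) by (auto simp: V_def intro: diameter_bounded_bound)
        moreover have "dist (f x) (f y) powr \<gamma> \<le> diameter (U i) powr \<gamma>"
          using calculation(1) g by (intro powr_mono2) auto
        ultimately show "dist x y \<le> K * diameter (U i) powr \<gamma>"
          using H K by (meson mult_left_mono order.trans less_imp_le)
      qed
      have Vb: "bounded (V i)" for i
        unfolding bounded_two_points using Vd by blast
      have Vdiam: "diameter (V i) \<le> K * diameter (U i) powr \<gamma>" for i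
        using Vd K by (intro diameter_le_metric) auto
      have "diameter (U i) powr \<gamma> \<le> \<delta>' powr \<gamma>" for i
        using U(2) g diameter_ge_0[of "U i"] by (intro powr_mono2) (auto simp: Vb)
      hence Vdel: "diameter (V i) \<le> \<delta>" for i
        using Vdiam[of i] K Kd by (metis mult_left_mono order.trans less_imp_le)
      have Vcov: "A \<subseteq> (\<Union>i. V i)" using U(1) unfolding V_def by auto
      have trm: "ennreal (diameter (V i) powr (s/\<gamma>)) \<le> ennreal c * ennreal (diameter (U i) powr s)" for i
      proof -
        have "diameter (V i) powr (s/\<gamma>) \<le> (K * diameter (U i) powr \<gamma>) powr (s/\<gamma>)"
          using Vdiam[of i] s g diameter_ge_0[OF Vb] by (intro powr_mono2) auto
        also have "\<dots> = c * diameter (U i) powr s"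
          using K g s diameter_ge_0[of "U i"] U(2)
          by (simp add: c_def powr_mult powr_powr)
        finally show ?thesis
          using cpos by (simp add: ennreal_mult[symmetric])
      qed
      have "hausdorff_pre (s/\<gamma>) \<delta> A \<le> (\<Sum>i. ennreal (diameter (V i) powr (s/\<gamma>)))"
        unfolding hausdorff_pre_def using Vcov Vb Vdel by (intro INF_lower) auto
      also have "\<dots> \<le> (\<Sum>i. ennreal c * ennreal (diameter (U i) powr s))"
        by (intro suminf_le trm) auto
      also have "\<dots> = ennreal c * (\<Sum>i. ennreal (diameter (U i) powr s))"
        by simp
      also have "\<dots> \<le> ennreal c * ennreal (e / c)"
        using Us by (intro mult_left_mono) auto
      also have "\<dots> = ennreal (c * (e / c))"
        using cpos e by (intro ennreal_mult[symmetric]) auto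
      also have "\<dots> = ennreal e"
        by (rule arg_cong[where f=ennreal]) (use cpos in auto)
      finally show ?thesis by (simp only: add_0_left)
    qed
    hence E: "\<And>e. 0 < e \<Longrightarrow> hausdorff_pre (s/\<gamma>) \<delta> A \<le> 0 + ennreal e" by blast
    have "hausdorff_pre (s/\<gamma>) \<delta> A \<le> 0" by (rule ennreal_le_epsilon, rule E)
    thus ?thesis by simp
  qed
  thus ?thesis unfolding hausdorff_measure_def by simp
qed

lemma holder_dim:
  fixes f :: "'a::metric_space \<Rightarrow> 'b::metric_space"
  assumes K: "K > 0" and g: "\<gamma> > 0"
    and H: "\<forall>x\<in>A. \<forall>y\<in>A. dist x y \<le> K * dist (f x) (f y) powr \<gamma>"
  shows "hausdorff_dim A \<le> ereal (1/\<gamma>) * hausdorff_dim (f ` A)"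
proof (rule dense_ge)
  fix t assume t: "ereal (1/\<gamma>) * hausdorff_dim (f ` A) < t"
  define d where "d = hausdorff_dim (f ` A)"
  have d0: "d \<ge> 0" unfolding d_def by (rule hdim_nonneg)
  show "hausdorff_dim A \<le> t"
  proof (cases t)
    case PInf then show ?thesis by simp
  next
    case MInf then show ?thesis using t by simp
  next
    case (real r)
    have "d \<noteq> \<infinity>"
    proof
      assume "d = \<infinity>"
      hence "ereal (1/\<gamma>) * d = \<infinity>" using g by simp
      hence "\<infinity> < t" using t unfolding d_def by (simp only:)
      thus False using real by simp
    qed
    with d0 obtain e where e: "d = ereal e" "e \<ge> 0" by (cases d) auto
    have "e / \<gamma> < r" using t real e g unfolding d_def by simp
    hence "e < r * \<gamma>" using g by (simp add: field_simps)
    hence "d < ereal (r * \<gamma>)" using e by simp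
    then obtain x where x: "x \<in> {ereal s | s. 0 < s \<and> hausdorff_measure s (f ` A) = 0}"
      "x < ereal (r * \<gamma>)"
      unfolding d_def hausdorff_dim_def Inf_less_iff by blast
    then obtain s where s: "0 < s" "hausdorff_measure s (f ` A) = 0" "s < r * \<gamma>"
      by auto
    have "hausdorff_measure (s / \<gamma>) A = 0" using holder_null[OF K g s(1) H s(2)] .
    hence "hausdorff_dim A \<le> ereal (s / \<gamma>)"
      unfolding hausdorff_dim_def using s g by (intro Inf_lower) auto
    also have "s / \<gamma> < r" using s g by (simp add: field_simps)
    finally show ?thesis using real by simp
  qed
qed

theorem theorem1:
  fixes D :: "'d::metric_space set"
    and L1 :: "'a::metric_space set"
    and L2 :: "'b::metric_space set"
    and \<phi>1 :: "'d \<times> 'a \<Rightarrow> 'm::real_normed_vector"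
    and \<phi>2 :: "'d \<times> 'b \<Rightarrow> 'm"
    and C0 \<alpha> M0 \<beta> :: real
  assumes "C0 > 0" and "\<alpha> > 0"
    and "\<forall>\<xi>\<in>D. \<forall>x\<in>L1. \<forall>y\<in>L1. norm (\<phi>1 (\<xi>, x) - \<phi>1 (\<xi>, y)) \<le> C0 * dist x y powr \<alpha>"
    and "\<forall>\<xi>\<in>D. \<forall>x\<in>L2. \<forall>y\<in>L2. norm (\<phi>2 (\<xi>, x) - \<phi>2 (\<xi>, y)) \<le> C0 * dist x y powr \<alpha>"
    and "M0 > 0" and "\<beta> > 0"
    and "\<forall>\<xi>\<in>D. \<forall>\<xi>'\<in>D. \<forall>x1\<in>L1. \<forall>x2\<in>L2.
           norm ((\<phi>1 (\<xi>', x1) - \<phi>2 (\<xi>', x2)) - (\<phi>1 (\<xi>, x1) - \<phi>2 (\<xi>, x2)))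
             \<ge> M0 * dist \<xi>' \<xi> powr \<beta>"
  shows "hausdorff_dim {\<xi> \<in> D. (\<lambda>x. \<phi>1 (\<xi>, x)) ` L1 \<inter> (\<lambda>x. \<phi>2 (\<xi>, x)) ` L2 \<noteq> {}}
           \<le> min (ereal (\<beta> / \<alpha>) * hausdorff_dim (L1 \<times> L2)) (hausdorff_dim D)
       \<and> (continuous_on (D \<times> L1) \<phi>1 \<and> continuous_on (D \<times> L2) \<phi>2 \<and> compact L1 \<and> compact L2
          \<longrightarrow> closedin (top_of_set D)
                {\<xi> \<in> D. (\<lambda>x. \<phi>1 (\<xi>, x)) ` L1 \<inter> (\<lambda>x. \<phi>2 (\<xi>, x)) ` L2 \<noteq> {}})"
proof -
  note C0 = assms(1) and al = assms(2) and H1 = assms(3) and H2 = assms(4)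
    and M0 = assms(5) and be = assms(6) and B = assms(7)
  define S where "S = {\<xi> \<in> D. (\<lambda>x. \<phi>1 (\<xi>, x)) ` L1 \<inter> (\<lambda>x. \<phi>2 (\<xi>, x)) ` L2 \<noteq> {}}"
  have Smem: "\<xi> \<in> S \<longleftrightarrow> \<xi> \<in> D \<and> (\<exists>x\<in>L1. \<exists>y\<in>L2. \<phi>1 (\<xi>, x) = \<phi>2 (\<xi>, y))" for \<xi>
    unfolding S_def by blast
  have "\<forall>\<xi>\<in>S. \<exists>p\<in>L1 \<times> L2. \<phi>1 (\<xi>, fst p) = \<phi>2 (\<xi>, snd p)"
    using Smem by fastforce
  then obtain g where g: "\<And>\<xi>. \<xi> \<in> S \<Longrightarrow> g \<xi> \<in> L1 \<times> L2 \<and> \<phi>1 (\<xi>, fst (g \<xi>)) = \<phi>2 (\<xi>, snd (g \<xi>))"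
    by metis
  define K where "K = (2 * C0 / M0) powr (1 / \<beta>)"
  have Kpos: "K > 0" using C0 M0 unfolding K_def by simp
  have gam: "\<alpha> / \<beta> > 0" using al be by simp
  have Hol: "\<forall>\<xi>\<in>S. \<forall>\<xi>'\<in>S. dist \<xi> \<xi>' \<le> K * dist (g \<xi>) (g \<xi>') powr (\<alpha> / \<beta>)"
  proof (intro ballI)
    fix \<xi> \<xi>' assume xs: "\<xi> \<in> S" "\<xi>' \<in> S"
    define x1 where "x1 = fst (g \<xi>)"
    define x2 where "x2 = snd (g \<xi>)"
    define y1 where "y1 = fst (g \<xi>')"
    define y2 where "y2 = snd (g \<xi>')"
    define dd where "dd = dist (g \<xi>) (g \<xi>')"
    have mem: "x1 \<in> L1" "x2 \<in> L2" "y1 \<in> L1" "y2 \<in> L2" "\<xi> \<in> D" "\<xi>' \<in> D"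
      using g[OF xs(1)] g[OF xs(2)] xs unfolding x1_def x2_def y1_def y2_def Smem by auto
    have e1: "\<phi>1 (\<xi>, x1) = \<phi>2 (\<xi>, x2)" using g[OF xs(1)] unfolding x1_def x2_def by simp
    have e2: "\<phi>1 (\<xi>', y1) = \<phi>2 (\<xi>', y2)" using g[OF xs(2)] unfolding y1_def y2_def by simp
    have "M0 * dist \<xi>' \<xi> powr \<beta> \<le> norm (\<phi>1 (\<xi>', x1) - \<phi>2 (\<xi>', x2))"
      using B mem e1 by force
    also have "\<phi>1 (\<xi>', x1) - \<phi>2 (\<xi>', x2) = (\<phi>1 (\<xi>', x1) - \<phi>1 (\<xi>', y1)) - (\<phi>2 (\<xi>', x2) - \<phi>2 (\<xi>', y2))"
      using e2 by (simp add: algebra_simps)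
    also have "norm \<dots> \<le> norm (\<phi>1 (\<xi>', x1) - \<phi>1 (\<xi>', y1)) + norm (\<phi>2 (\<xi>', x2) - \<phi>2 (\<xi>', y2))"
      by (rule norm_triangle_ineq4)
    also have "\<dots> \<le> C0 * dist x1 y1 powr \<alpha> + C0 * dist x2 y2 powr \<alpha>"
      using H1 H2 mem by (intro add_mono) auto
    also have "\<dots> \<le> C0 * dd powr \<alpha> + C0 * dd powr \<alpha>"
    proof -
      have "dist x1 y1 \<le> dd" "dist x2 y2 \<le> dd"
        unfolding x1_def y1_def x2_def y2_def dd_def by (rule dist_fst_le, rule dist_snd_le)
      hence "dist x1 y1 powr \<alpha> \<le> dd powr \<alpha>" "dist x2 y2 powr \<alpha> \<le> dd powr \<alpha>"
        using al by (auto intro: powr_mono2)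
      thus ?thesis using C0 by (intro add_mono mult_left_mono) auto
    qed
    finally have "M0 * dist \<xi>' \<xi> powr \<beta> \<le> 2 * C0 * dd powr \<alpha>" by simp
    hence le: "dist \<xi> \<xi>' powr \<beta> \<le> (2 * C0 / M0) * dd powr \<alpha>"
      using M0 by (simp add: field_simps dist_commute)
    have "dist \<xi> \<xi>' = (dist \<xi> \<xi>' powr \<beta>) powr (1 / \<beta>)"
      using be by (simp add: powr_powr)
    also have "\<dots> \<le> ((2 * C0 / M0) * dd powr \<alpha>) powr (1 / \<beta>)"
      using le be by (intro powr_mono2) auto
    also have "\<dots> = K * dd powr (\<alpha> / \<beta>)"
      using C0 M0 be unfolding K_def by (subst powr_mult) (auto simp: powr_powr dd_def)
    finally show "dist \<xi> \<xi>' \<le> K * dist (g \<xi>) (g \<xi>') powr (\<alpha> / \<beta>)" unfolding dd_def .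
  qed
  have "hausdorff_dim S \<le> ereal (1 / (\<alpha> / \<beta>)) * hausdorff_dim (g ` S)"
    by (rule holder_dim[OF Kpos gam Hol])
  also have "\<dots> \<le> ereal (\<beta> / \<alpha>) * hausdorff_dim (L1 \<times> L2)"
  proof -
    have "g ` S \<subseteq> L1 \<times> L2" using g by blast
    hence "hausdorff_dim (g ` S) \<le> hausdorff_dim (L1 \<times> L2)" by (rule hdim_mono)
    moreover have "1 / (\<alpha> / \<beta>) = \<beta> / \<alpha>" by simp
    ultimately show ?thesis using al be by (metis ereal_mult_left_mono ereal_less_eq(5) less_imp_le divide_pos_pos)
  qed
  finally have P1: "hausdorff_dim S \<le> ereal (\<beta> / \<alpha>) * hausdorff_dim (L1 \<times> L2)" .
  have P2: "hausdorff_dim S \<le> hausdorff_dim D"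
    by (rule hdim_mono) (auto simp: S_def)
  have P3: "closedin (top_of_set D) S"
    if c1: "continuous_on (D \<times> L1) \<phi>1" and c2: "continuous_on (D \<times> L2) \<phi>2"
      and k1: "compact L1" and k2: "compact L2"
  proof -
    have "D \<inter> closure S \<subseteq> S"
    proof
      fix \<xi> assume "\<xi> \<in> D \<inter> closure S"
      then have \<xi>D: "\<xi> \<in> D" and "\<xi> \<in> closure S" by auto
      then obtain u where u: "\<forall>n. u n \<in> S" "u \<longlonglongrightarrow> \<xi>" unfolding closure_sequential by blast
      have "\<forall>n. \<exists>p. p \<in> L1 \<times> L2 \<and> \<phi>1 (u n, fst p) = \<phi>2 (u n, snd p)"
        using u(1) Smem by fastforce
      then obtain p where p: "\<And>n. p n \<in> L1 \<times> L2 \<and> \<phi>1 (u n, fst (p n)) = \<phi>2 (u n, snd (p n))"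
        by metis
      have "seq_compact (L1 \<times> L2)"
        by (rule compact_imp_seq_compact, rule compact_Times[OF k1 k2])
      then obtain l r where lr: "l \<in> L1 \<times> L2" "strict_mono r" "(p \<circ> r) \<longlonglongrightarrow> l"
        using p by (metis seq_compactE)
      have ur: "(u \<circ> r) \<longlonglongrightarrow> \<xi>" using LIMSEQ_subseq_LIMSEQ[OF u(2) lr(2)] .
      have uD: "u n \<in> D" for n using u(1) Smem by blast
      define s1 where "s1 n = (u (r n), fst (p (r n)))" for n
      define s2 where "s2 n = (u (r n), snd (p (r n)))" for n
      have s1l: "s1 \<longlonglongrightarrow> (\<xi>, fst l)" unfolding s1_def
        using ur tendsto_fst[OF lr(3)] by (intro tendsto_Pair) (auto simp: comp_def)
      have s2l: "s2 \<longlonglongrightarrow> (\<xi>, snd l)" unfolding s2_def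
        using ur tendsto_snd[OF lr(3)] by (intro tendsto_Pair) (auto simp: comp_def)
      have s1m: "\<forall>n. s1 n \<in> D \<times> L1" and s2m: "\<forall>n. s2 n \<in> D \<times> L2"
        using p uD unfolding s1_def s2_def by (auto simp: mem_Times_iff)
      have l1: "(\<xi>, fst l) \<in> D \<times> L1" and l2: "(\<xi>, snd l) \<in> D \<times> L2"
        using lr(1) \<xi>D by (auto simp: mem_Times_iff)
      have t1: "(\<phi>1 \<circ> s1) \<longlonglongrightarrow> \<phi>1 (\<xi>, fst l)"
        using c1 l1 s1m s1l unfolding continuous_on_sequentially by blast
      have t2: "(\<phi>2 \<circ> s2) \<longlonglongrightarrow> \<phi>2 (\<xi>, snd l)"
        using c2 l2 s2m s2l unfolding continuous_on_sequentially by blast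
      have "\<phi>1 \<circ> s1 = \<phi>2 \<circ> s2" using p unfolding s1_def s2_def by (auto simp: comp_def)
      hence "\<phi>1 (\<xi>, fst l) = \<phi>2 (\<xi>, snd l)" using t1 t2 LIMSEQ_unique by metis
      thus "\<xi> \<in> S" using \<xi>D lr(1) Smem by (auto simp: mem_Times_iff)
    qed
    hence "S = D \<inter> closure S" using closure_subset[of S] by (auto simp: S_def)
    thus ?thesis unfolding closedin_closed by blast
  qed
  show ?thesis using P1 P2 P3 unfolding S_def by auto
qed

end
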